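(* Let $A_n=S_n\wr\mathrm{Aut}(\mathcal{T}_d)$, $\rho_n:A_n\to S_n$, $\sigma(f_1,\dots,f_n)\mapsto\sigma$, and $\kappa_k^n:A_n\to A_{n+d-1}$ ($1\le k\le n$) the maps defined in the context. Then each $\kappa_k^n$ is injective and the following hold for all $n$, all $g,h\in A_n$ and all $1\le k<\ell\le n$: (C1) $(gh)\kappa_k^n=(g)\kappa^n_{\rho_n(h)(k)}\,(h)\kappa_k^n$ (for all $1\le k\le n$); (C2) $((g)\kappa_\ell^n)\kappa_k^{n+d-1}=((g)\kappa_k^n)\kappa_{\ell+d-1}^{n+d-1}$; (C3) $\rho_{n+d-1}((g)\kappa_k^n)(i)=((\rho_n(g))\varsigma_k^n)(i)$ for all $i\notin\{k,k+1,\dots,k+d-1\}$. That is, $((A_n)_n,(\rho_n)_n,(\kappa_k^n)_{k\le n})$ is a $d$-ary cloning system.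
   Context: $d\ge2$, $\mathcal{T}_d$ is the rooted $d$-ary tree on words over $X=\{1,\dots,d\}$. Permutations act on the left ($\sigma\tau$ = first $\tau$, then $\sigma$). $S_n\wr G=S_n\ltimes G^n$ with elements $\sigma(g_1,\dots,g_n)$ and product $\sigma(f_1,\dots,f_n)\tau(g_1,\dots,g_n)=\sigma\tau(f_{\tau(1)}g_1,\dots,f_{\tau(n)}g_n)$. Each $f\in\mathrm{Aut}(\mathcal{T}_d)$ has a unique wreath recursion $f=\rho(f)(f^1,\dots,f^d)$ with $\rho(f)\in S_d$, $f^x\in\mathrm{Aut}(\mathcal{T}_d)$ and $f(xw)=\rho(f)(x)f^x(w)$. For $\sigma\in S_n$ and $1\le k\le n$, $(\sigma)\varsigma_k^n\in S_{n+d-1}$ is: for $i<k$, $i\mapsto\sigma(i)$ if $\sigma(i)<\sigma(k)$, $i\mapsto\sigma(i)+d-1$ if $\sigma(i)>\sigma(k)$; for $k\le i\le k+d-1$, $i\mapsto\sigma(k)+i-k$; for $i>k+d-1$, $i\mapsto\sigma(i-d+1)$ if $\sigma(i-d+1)<\sigma(k)$ and $i\mapsto\sigma(i-d+1)+d-1$ if $\sigma(i-d+1)>\sigma(k)$. For $\tau\in S_d$ let $\tau^{(k)}\in S_{n+d-1}$ send $k+j-1\mapsto k+\tau(j)-1$ ($1\le j\le d$) and fix other points. Define $(\sigma(f_1,\dots,f_n))\kappa_k^n=(\sigma)\varsigma_k^n\,\rho(f_k)^{(k)}\,(f_1,\dots,f_{k-1},f_k^1,\dots,f_k^d,f_{k+1},\dots,f_n)\in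 A_{n+d-1}$, where $f_k=\rho(f_k)(f_k^1,\dots,f_k^d)$. *)

theory Defs
  imports "HOL-Combinatorics.Permutations" "HOL-Library.Sublist"
begin

text \<open>Vertices of the d-ary tree: words over X = {1..d}.\<close>
definition words :: "nat \<Rightarrow> nat list set" where
  "words d = {w. set w \<subseteq> {1..d}}"

text \<open>Automorphisms of the rooted d-ary tree, represented as functions on nat lists
  that are the identity outside the vertex set (canonical representatives).\<close>
definition is_aut :: "nat \<Rightarrow> (nat list \<Rightarrow> nat list) \<Rightarrow> bool" where
  "is_aut d f \<longleftrightarrow> bij_betw f (words d) (words d)
     \<and> (\<forall>w\<in>words d. length (f w) = length w)
     \<and> (\<forall>u\<in>words d. \<forall>v\<in>words d. prefix u v \<longrightarrow> prefix (f u) (f v))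
     \<and> (\<forall>w. w \<notin> words d \<longrightarrow> f w = w)"

text \<open>Wreath recursion f = rho(f)(f^1,...,f^d), with f(xw) = rho(f)(x) f^x(w).\<close>
definition rho_aut :: "nat \<Rightarrow> (nat list \<Rightarrow> nat list) \<Rightarrow> nat \<Rightarrow> nat" where
  "rho_aut d f = (\<lambda>x. if x \<in> {1..d} then hd (f [x]) else x)"

definition sect :: "nat \<Rightarrow> (nat list \<Rightarrow> nat list) \<Rightarrow> nat \<Rightarrow> nat list \<Rightarrow> nat list" where
  "sect d f x = (\<lambda>w. if w \<in> words d then tl (f (x # w)) else w)"

text \<open>An element sigma(f_1,...,f_n) is a pair (sigma, fs); sigma permutes {1..n}
  (identity elsewhere), fs i is an automorphism for i in {1..n} and id elsewhere.
  Permutations act on the left, composition is function composition.\<close>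
type_synonym wr_elem = "(nat \<Rightarrow> nat) \<times> (nat \<Rightarrow> nat list \<Rightarrow> nat list)"

definition A :: "nat \<Rightarrow> nat \<Rightarrow> wr_elem set" where
  "A d n = {(\<sigma>, fs). \<sigma> permutes {1..n} \<and> (\<forall>i\<in>{1..n}. is_aut d (fs i))
                       \<and> (\<forall>i. i \<notin> {1..n} \<longrightarrow> fs i = id)}"

definition wr_mult :: "wr_elem \<Rightarrow> wr_elem \<Rightarrow> wr_elem" where
  "wr_mult g h = (fst g \<circ> fst h, \<lambda>i. snd g (fst h i) \<circ> snd h i)"

definition rho_n :: "wr_elem \<Rightarrow> nat \<Rightarrow> nat" where
  "rho_n g = fst g"

definition varsigma :: "nat \<Rightarrow> nat \<Rightarrow> nat \<Rightarrow> (nat \<Rightarrow> nat) \<Rightarrow> nat \<Rightarrow> nat" where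
  "varsigma d n k \<sigma> = (\<lambda>i.
     if 1 \<le> i \<and> i < k then (if \<sigma> i < \<sigma> k then \<sigma> i else \<sigma> i + d - 1)
     else if k \<le> i \<and> i \<le> k + d - 1 then \<sigma> k + i - k
     else if k + d - 1 < i \<and> i \<le> n + d - 1 then
       (if \<sigma> (i - d + 1) < \<sigma> k then \<sigma> (i - d + 1) else \<sigma> (i - d + 1) + d - 1)
     else i)"

definition tau_at :: "nat \<Rightarrow> nat \<Rightarrow> (nat \<Rightarrow> nat) \<Rightarrow> nat \<Rightarrow> nat" where
  "tau_at d k \<tau> = (\<lambda>i. if k \<le> i \<and> i \<le> k + d - 1 then k + \<tau> (i - k + 1) - 1 else i)"

definition kappa :: "nat \<Rightarrow> nat \<Rightarrow> nat \<Rightarrow> wr_elem \<Rightarrow> wr_elem" where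
  "kappa d n k g = (case g of (\<sigma>, fs) \<Rightarrow>
     (varsigma d n k \<sigma> \<circ> tau_at d k (rho_aut d (fs k)),
      \<lambda>i. if 1 \<le> i \<and> i < k then fs i
          else if k \<le> i \<and> i \<le> k + d - 1 then sect d (fs k) (i - k + 1)
          else if k + d - 1 < i \<and> i \<le> n + d - 1 then fs (i - d + 1)
          else id))"

end

theory Submission
  imports Defs
begin


lemma words_Cons[simp]: "x # w \<in> words d \<longleftrightarrow> x \<in> {1..d} \<and> w \<in> words d"
  by (auto simp: words_def)
lemma words_Nil[simp]: "[] \<in> words d" by (auto simp: words_def)

lemma aut_nil: assumes "is_aut d f" shows "f [] = []"
  using assms unfolding is_aut_def by (metis length_0_conv words_Nil)

lemma aut_cons:
  assumes f: "is_aut d f" and x: "x \<in> {1..d}" and w: "w \<in> words d"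
  shows "f (x # w) = rho_aut d f x # sect d f x w \<and> rho_aut d f x \<in> {1..d} \<and> sect d f x w \<in> words d"
proof -
  have xw: "[x] \<in> words d" "x # w \<in> words d" using x w by auto
  have bij: "bij_betw f (words d) (words d)" using f by (simp add: is_aut_def)
  have inw: "f [x] \<in> words d" "f (x#w) \<in> words d" using bij xw by (auto dest: bij_betwE)
  have l: "length (f [x]) = 1" using f xw unfolding is_aut_def by fastforce
  have p: "prefix (f [x]) (f (x # w))" using f xw unfolding is_aut_def by fastforce
  from l obtain z where z: "f [x] = [z]" by (cases "f [x]") auto
  from p z obtain r where r: "f (x # w) = z # r" by (auto simp: prefix_def)
  have "rho_aut d f x = z" using x z by (simp add: rho_aut_def)
  moreover have "sect d f x w = r" using w r by (simp add: sect_def)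
  ultimately show ?thesis using r inw z by auto
qed

lemma rho_in: "is_aut d f \<Longrightarrow> x \<in> {1..d} \<Longrightarrow> rho_aut d f x \<in> {1..d}"
  using aut_cons[of d f x "[]"] by auto

lemma aut_single: assumes f: "is_aut d f" and x: "x \<in> {1..d}" shows "f [x] = [rho_aut d f x]"
proof -
  have "length (f [x]) = 1" using f x unfolding is_aut_def by fastforce
  thus ?thesis using aut_cons[OF f x words_Nil] by (cases "f [x]") auto
qed

lemma rho_inj:
  assumes f: "is_aut d f" and "x \<in> {1..d}" "y \<in> {1..d}" "rho_aut d f x = rho_aut d f y"
  shows "x = y"
proof -
  have "f [x] = f [y]" using aut_single[OF f assms(2)] aut_single[OF f assms(3)] assms(4)
    by simp
  moreover have "inj_on f (words d)" using f by (simp add: is_aut_def bij_betw_def)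
  ultimately show ?thesis using assms(2,3) by (auto dest: inj_onD)
qed

lemma rho_surj:
  assumes f: "is_aut d f" and y: "y \<in> {1..d}" shows "\<exists>x\<in>{1..d}. rho_aut d f x = y"
proof -
  have "rho_aut d f ` {1..d} = {1..d}"
  proof (rule endo_inj_surj)
    show "rho_aut d f ` {1..d} \<subseteq> {1..d}" using rho_in[OF f] by blast
    show "inj_on (rho_aut d f) {1..d}" by (rule inj_onI) (rule rho_inj[OF f])
  qed simp
  thus ?thesis using y by (metis imageE)
qed

lemma aut_recon:
  assumes f: "is_aut d f"
  shows "f w = (if w \<in> words d then (case w of [] \<Rightarrow> [] | x # v \<Rightarrow> rho_aut d f x # sect d f x v) else w)"
proof (cases "w \<in> words d")
  case True thus ?thesis using aut_nil[OF f] aut_cons[OF f] by (cases w) auto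
next
  case False thus ?thesis using f by (simp add: is_aut_def)
qed

lemma aut_eq:
  assumes f: "is_aut d f" and g: "is_aut d g"
    and r: "\<And>x. x \<in> {1..d} \<Longrightarrow> rho_aut d f x = rho_aut d g x"
    and s: "\<And>x. x \<in> {1..d} \<Longrightarrow> sect d f x = sect d g x"
  shows "f = g"
proof
  fix w show "f w = g w"
    by (subst aut_recon[OF f], subst aut_recon[OF g]) (auto split: list.split simp: r s)
qed

lemma aut_comp:
  assumes f: "is_aut d f" and g: "is_aut d g" shows "is_aut d (f \<circ> g)"
  using assms unfolding is_aut_def
  by (auto intro: bij_betw_trans dest: bij_betwE)

lemma rho_comp:
  assumes f: "is_aut d f" and g: "is_aut d g" and x: "x \<in> {1..d}"
  shows "rho_aut d (f \<circ> g) x = rho_aut d f (rho_aut d g x)"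
proof -
  have "(f \<circ> g) [x] = rho_aut d f (rho_aut d g x) # sect d f (rho_aut d g x) (sect d g x [])"
    using aut_cons[OF g x words_Nil] aut_cons[OF f _ ] by auto
  thus ?thesis using x by (simp add: rho_aut_def)
qed

lemma sect_comp:
  assumes f: "is_aut d f" and g: "is_aut d g" and x: "x \<in> {1..d}"
  shows "sect d (f \<circ> g) x = sect d f (rho_aut d g x) \<circ> sect d g x"
proof
  fix w show "sect d (f \<circ> g) x w = (sect d f (rho_aut d g x) \<circ> sect d g x) w"
  proof (cases "w \<in> words d")
    case True
    then show ?thesis using aut_cons[OF g x True] aut_cons[OF f, of "rho_aut d g x" "sect d g x w"]
      by (simp add: sect_def[of d "f \<circ> g"])
  next
    case False
    then show ?thesis by (simp add: sect_def)
  qed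
qed

lemma sect_aut:
  assumes f: "is_aut d f" and x: "x \<in> {1..d}" shows "is_aut d (sect d f x)"
proof -
  have bij: "bij_betw f (words d) (words d)" using f by (simp add: is_aut_def)
  have inj: "inj_on (sect d f x) (words d)"
  proof (rule inj_onI)
    fix u v assume u: "u \<in> words d" and v: "v \<in> words d" and e: "sect d f x u = sect d f x v"
    have "f (x # u) = f (x # v)" using aut_cons[OF f x u] aut_cons[OF f x v] e by simp
    thus "u = v" using bij u v x by (auto simp: bij_betw_def dest: inj_onD)
  qed
  have sur: "sect d f x ` words d = words d"
  proof
    show "sect d f x ` words d \<subseteq> words d" using aut_cons[OF f x] by auto
    show "words d \<subseteq> sect d f x ` words d"
    proof
      fix v assume v: "v \<in> words d"
      have "rho_aut d f x # v \<in> words d" using v rho_in[OF f x] by simp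
      then obtain y where y: "y \<in> words d" "f y = rho_aut d f x # v"
        using bij by (metis bij_betw_def imageE)
      then obtain z w where zw: "y = z # w" using aut_nil[OF f] by (cases y) auto
      have z: "z \<in> {1..d}" "w \<in> words d" using y zw by auto
      have "rho_aut d f z = rho_aut d f x" "sect d f z w = v" using aut_cons[OF f z] y zw by auto
      hence "z = x" using rho_inj[OF f z(1) x] by simp
      thus "v \<in> sect d f x ` words d" using z \<open>sect d f z w = v\<close> by auto
    qed
  qed
  have len: "\<forall>w\<in>words d. length (sect d f x w) = length w"
  proof
    fix w assume w: "w \<in> words d"
    have "length (f (x # w)) = length (x # w)" using f w x unfolding is_aut_def by simp
    thus "length (sect d f x w) = length w" using aut_cons[OF f x w] by simp
  qed
  have pre: "\<forall>u\<in>words d. \<forall>v\<in>words d. prefix u v \<longrightarrow> prefix (sect d f x u) (sect d f x v)"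
  proof (intro ballI impI)
    fix u v assume u: "u \<in> words d" and v: "v \<in> words d" and p: "prefix u v"
    have "prefix (f (x # u)) (f (x # v))" using f u v x p unfolding is_aut_def by simp
    thus "prefix (sect d f x u) (sect d f x v)" using aut_cons[OF f x u] aut_cons[OF f x v] by simp
  qed
  show ?thesis unfolding is_aut_def using inj sur len pre
    by (auto simp: bij_betw_def sect_def)
qed


definition ee :: "nat \<Rightarrow> nat \<Rightarrow> nat \<Rightarrow> nat" where
  "ee d k j = (if j < k then j else j + d - 1)"

lemma kappa_ee:
  assumes "1 \<le> d" "1 \<le> k" "k \<le> n" "j \<in> {1..n}" "j \<noteq> k"
  shows "fst (kappa d n k (\<sigma>, fs)) (ee d k j) = ee d (\<sigma> k) (\<sigma> j)"
    and "snd (kappa d n k (\<sigma>, fs)) (ee d k j) = fs j"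
proof -
  consider "j < k" | "k < j" using assms by linarith
  hence "fst (kappa d n k (\<sigma>, fs)) (ee d k j) = ee d (\<sigma> k) (\<sigma> j) \<and> snd (kappa d n k (\<sigma>, fs)) (ee d k j) = fs j"
  proof cases
    case 1 thus ?thesis using assms by (simp add: kappa_def varsigma_def tau_at_def ee_def)
  next
    case 2
    have e: "ee d k j = j + d - 1" using 2 by (simp add: ee_def)
    have "\<not> (1 \<le> j + d - 1 \<and> j + d - 1 < k)" "\<not> (k \<le> j + d - 1 \<and> j + d - 1 \<le> k + d - 1)"
      "k + d - 1 < j + d - 1 \<and> j + d - 1 \<le> n + d - 1" "j + d - 1 - d + 1 = j"
      using 2 assms by auto
    thus ?thesis unfolding e by (simp add: kappa_def varsigma_def tau_at_def ee_def)
  qed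
  thus "fst (kappa d n k (\<sigma>, fs)) (ee d k j) = ee d (\<sigma> k) (\<sigma> j)" "snd (kappa d n k (\<sigma>, fs)) (ee d k j) = fs j" by auto
qed

lemma kappa_blk:
  assumes "1 \<le> k" "k \<le> n" "x \<in> {1..d}" "rho_aut d (fs k) x \<in> {1..d}"
  shows "fst (kappa d n k (\<sigma>, fs)) (k + x - 1) = \<sigma> k + rho_aut d (fs k) x - 1"
    and "snd (kappa d n k (\<sigma>, fs)) (k + x - 1) = sect d (fs k) x"
proof -
  have "\<not> (1 \<le> k + x - 1 \<and> k + x - 1 < k)" "k \<le> k + x - 1 \<and> k + x - 1 \<le> k + d - 1"
       "k + x - 1 - k + 1 = x" 
       "\<not> (1 \<le> k + rho_aut d (fs k) x - 1 \<and> k + rho_aut d (fs k) x - 1 < k)"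
       "k \<le> k + rho_aut d (fs k) x - 1 \<and> k + rho_aut d (fs k) x - 1 \<le> k + d - 1"
       "\<sigma> k + (k + rho_aut d (fs k) x - 1) - k = \<sigma> k + rho_aut d (fs k) x - 1"
    using assms by auto
  thus "fst (kappa d n k (\<sigma>, fs)) (k + x - 1) = \<sigma> k + rho_aut d (fs k) x - 1"
    "snd (kappa d n k (\<sigma>, fs)) (k + x - 1) = sect d (fs k) x"
    by (simp_all add: kappa_def varsigma_def tau_at_def)
qed

lemma fst_kappa: "fst (kappa d n k (\<sigma>, fs)) i = varsigma d n k \<sigma> (tau_at d k (rho_aut d (fs k)) i)"
  by (simp add: kappa_def)
lemma snd_kappa: "snd (kappa d n k (\<sigma>, fs)) i = (if 1 \<le> i \<and> i < k then fs i
          else if k \<le> i \<and> i \<le> k + d - 1 then sect d (fs k) (i - k + 1)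
          else if k + d - 1 < i \<and> i \<le> n + d - 1 then fs (i - d + 1)
          else id)"
  by (simp add: kappa_def)

lemma kappa_out:
  assumes "1 \<le> k" "k \<le> n" "i = 0 \<or> n + d - 1 < i"
  shows "fst (kappa d n k (\<sigma>, fs)) i = i"
    and "snd (kappa d n k (\<sigma>, fs)) i = id"
proof -
  have h: "\<not> (1 \<le> i \<and> i < k)" "\<not> (k \<le> i \<and> i \<le> k + d - 1)" "\<not> (k + d - 1 < i \<and> i \<le> n + d - 1)"
    using assms by auto
  have "tau_at d k (rho_aut d (fs k)) i = i" unfolding tau_at_def by (simp only: h(2) if_False)
  moreover have "varsigma d n k \<sigma> i = i" unfolding varsigma_def using h by (simp only: if_False)
  ultimately show "fst (kappa d n k (\<sigma>, fs)) i = i" by (simp only: fst_kappa)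
  show "snd (kappa d n k (\<sigma>, fs)) i = id" unfolding snd_kappa using h by (simp only: if_False)
qed
lemma ee_inj: "1 \<le> d \<Longrightarrow> ee d a b = ee d a c \<Longrightarrow> b = c"
  by (auto simp: ee_def split: if_splits)

lemma ee_notblk: "1 \<le> d \<Longrightarrow> c \<noteq> a \<Longrightarrow> a \<le> ee d a c \<Longrightarrow> ee d a c \<le> a + d - 1 \<Longrightarrow> False"
  by (auto simp: ee_def split: if_splits)

lemma classify:
  assumes "1 \<le> d" "1 \<le> k" "k \<le> n" "i \<in> {1..n + d - 1}"
  obtains x where "x \<in> {1..d}" "i = k + x - 1"
  | j where "j \<in> {1..n}" "j \<noteq> k" "i = ee d k j"
proof -
  consider "i < k" | "k \<le> i" "i \<le> k + d - 1" | "k + d - 1 < i" by linarith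
  thus ?thesis
  proof cases
    case 1 thus ?thesis using that(2)[of i] assms by (auto simp: ee_def)
  next
    case 2 thus ?thesis using that(1)[of "i - k + 1"] assms by auto
  next
    case 3
    have "i - d + 1 \<in> {1..n}" "i - d + 1 \<noteq> k" "i = ee d k (i - d + 1)" using 3 assms by (auto simp: ee_def)
    thus ?thesis using that(2) by blast
  qed
qed

lemma A_iff: "(\<sigma>, fs) \<in> A d n \<longleftrightarrow> \<sigma> permutes {1..n} \<and> (\<forall>i\<in>{1..n}. is_aut d (fs i))
                       \<and> (\<forall>i. i \<notin> {1..n} \<longrightarrow> fs i = id)"
  by (simp add: A_def)

lemma kappa_A:
  assumes d: "1 \<le> d" and k: "1 \<le> k" "k \<le> n" and g: "(\<sigma>, fs) \<in> A d n"
  shows "kappa d n k (\<sigma>, fs) \<in> A d (n + d - 1)"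
proof -
  have s: "\<sigma> permutes {1..n}" and a: "\<And>i. i \<in> {1..n} \<Longrightarrow> is_aut d (fs i)"
    and o: "\<And>i. i \<notin> {1..n} \<Longrightarrow> fs i = id" using g by (auto simp: A_iff)
  have ak: "is_aut d (fs k)" using a k by auto
  have sin: "\<And>j. j \<in> {1..n} \<Longrightarrow> \<sigma> j \<in> {1..n}" by (simp only: permutes_in_image[OF s])
  have sinj: "\<And>i j. \<sigma> i = \<sigma> j \<Longrightarrow> i = j" using permutes_inj[OF s] by (simp add: inj_def)
  obtain p F where pF: "kappa d n k (\<sigma>, fs) = (p, F)" by fastforce
  have pb: "p (k + x - 1) = \<sigma> k + rho_aut d (fs k) x - 1" if x: "x \<in> {1..d}" for x
    using kappa_blk(1)[where fs=fs and \<sigma>=\<sigma>, OF k x rho_in[OF ak x]] pF by simp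
  have Fb: "F (k + x - 1) = sect d (fs k) x" if x: "x \<in> {1..d}" for x
    using kappa_blk(2)[where fs=fs and \<sigma>=\<sigma>, OF k x rho_in[OF ak x]] pF by simp
  have pe: "p (ee d k j) = ee d (\<sigma> k) (\<sigma> j)" if j: "j \<in> {1..n}" "j \<noteq> k" for j
    using kappa_ee(1)[OF d k j, of \<sigma> fs] pF by simp
  have Fe: "F (ee d k j) = fs j" if j: "j \<in> {1..n}" "j \<noteq> k" for j
    using kappa_ee(2)[OF d k j, of \<sigma> fs] pF by simp
  have po: "\<And>i. i \<notin> {1..n + d - 1} \<Longrightarrow> p i = i" 
    using kappa_out(1)[OF k] pF by (metis atLeastAtMost_iff fst_conv less_one not_le)
  have Fo: "\<And>i. i \<notin> {1..n + d - 1} \<Longrightarrow> F i = id" 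
    using kappa_out(2)[OF k] pF by (metis atLeastAtMost_iff snd_conv less_one not_le)
  have skn: "\<sigma> k \<in> {1..n}" using sin k by auto
  have pin: "p i \<in> {1..n + d - 1}" if i: "i \<in> {1..n + d - 1}" for i
  proof (rule classify[OF d k i])
    fix x assume x: "x \<in> {1..d}" "i = k + x - 1"
    show ?thesis using pb[OF x(1)] x rho_in[OF ak x(1)] skn by auto
  next
    fix j assume j: "j \<in> {1..n}" "j \<noteq> k" "i = ee d k j"
    show ?thesis using pe[OF j(1,2)] j sin[OF j(1)] skn d by (auto simp: ee_def)
  qed
  have pinj: "inj_on p {1..n + d - 1}"
  proof (rule inj_onI)
    fix i i' assume i: "i \<in> {1..n + d - 1}" and i': "i' \<in> {1..n + d - 1}" and e: "p i = p i'"
    show "i = i'"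
    proof (rule classify[OF d k i]; rule classify[OF d k i'])
      fix x x' assume x: "x \<in> {1..d}" "i = k + x - 1" and x': "x' \<in> {1..d}" "i' = k + x' - 1"
      have "rho_aut d (fs k) x = rho_aut d (fs k) x'"
        using e pb[OF x(1)] pb[OF x'(1)] x x' rho_in[OF ak x(1)] rho_in[OF ak x'(1)] by auto
      thus ?thesis using rho_inj[OF ak x(1) x'(1)] x x' by simp
    next
      fix x j assume x: "x \<in> {1..d}" "i = k + x - 1" and j: "j \<in> {1..n}" "j \<noteq> k" "i' = ee d k j"
      have ne: "\<sigma> j \<noteq> \<sigma> k" using sinj j by blast
      have v: "ee d (\<sigma> k) (\<sigma> j) = \<sigma> k + rho_aut d (fs k) x - 1" using e pb[OF x(1)] pe[OF j(1,2)] x j by simp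
      have False by (rule ee_notblk[OF d ne]) (use v rho_in[OF ak x(1)] in auto)
      thus ?thesis ..
    next
      fix x j assume x: "x \<in> {1..d}" "i' = k + x - 1" and j: "j \<in> {1..n}" "j \<noteq> k" "i = ee d k j"
      have ne: "\<sigma> j \<noteq> \<sigma> k" using sinj j by blast
      have v: "ee d (\<sigma> k) (\<sigma> j) = \<sigma> k + rho_aut d (fs k) x - 1" using e pb[OF x(1)] pe[OF j(1,2)] x j by simp
      have False by (rule ee_notblk[OF d ne]) (use v rho_in[OF ak x(1)] in auto)
      thus ?thesis ..
    next
      fix j j' assume j: "j \<in> {1..n}" "j \<noteq> k" "i = ee d k j" and j': "j' \<in> {1..n}" "j' \<noteq> k" "i' = ee d k j'"
      have "\<sigma> j = \<sigma> j'" using ee_inj[OF d] e pe[OF j(1,2)] pe[OF j'(1,2)] j j' by metis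
      thus ?thesis using sinj j j' by blast
    qed
  qed
  have "p permutes {1..n + d - 1}"
    by (rule inj_imp_permutes[OF pinj]) (use pin po in auto)
  moreover have "is_aut d (F i)" if i: "i \<in> {1..n + d - 1}" for i
  proof (rule classify[OF d k i])
    fix x assume x: "x \<in> {1..d}" "i = k + x - 1"
    show ?thesis using Fb[OF x(1)] x sect_aut[OF ak x(1)] by simp
  next
    fix j assume j: "j \<in> {1..n}" "j \<noteq> k" "i = ee d k j"
    show ?thesis using Fe[OF j(1,2)] j a by simp
  qed
  ultimately show ?thesis using pF Fo by (simp add: A_iff)
qed



lemma Aparts:
  assumes "(\<sigma>, fs) \<in> A d n"
  shows "\<sigma> permutes {1..n}" "\<And>i. i \<in> {1..n} \<Longrightarrow> is_aut d (fs i)" "\<And>i. i \<notin> {1..n} \<Longrightarrow> fs i = id"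
  using assms by (auto simp: A_iff)

lemma kb:
  assumes d: "1 \<le> d" and k: "1 \<le> k" "k \<le> n" and g: "(\<sigma>, fs) \<in> A d n" and x: "x \<in> {1..d}"
  shows "fst (kappa d n k (\<sigma>, fs)) (k + x - 1) = \<sigma> k + rho_aut d (fs k) x - 1"
    and "snd (kappa d n k (\<sigma>, fs)) (k + x - 1) = sect d (fs k) x"
  using kappa_blk[where fs=fs and \<sigma>=\<sigma>, OF k x rho_in[OF Aparts(2)[OF g] x]] k by auto

lemma kappa_inj:
  assumes d: "1 \<le> d" and k: "1 \<le> k" "k \<le> n" and g: "(\<sigma>, fs) \<in> A d n" and g': "(\<sigma>', fs') \<in> A d n"
    and e: "kappa d n k (\<sigma>, fs) = kappa d n k (\<sigma>', fs')"
  shows "(\<sigma>, fs) = (\<sigma>', fs')"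
proof -
  note s = Aparts(1)[OF g] and s' = Aparts(1)[OF g']
  have ak: "is_aut d (fs k)" "is_aut d (fs' k)" using Aparts(2)[OF g] Aparts(2)[OF g'] k by auto
  have eb: "\<sigma> k + rho_aut d (fs k) x - 1 = \<sigma>' k + rho_aut d (fs' k) x - 1" if x: "x \<in> {1..d}" for x
    using kb(1)[OF d k g x] kb(1)[OF d k g' x] e by metis
  have sb: "sect d (fs k) x = sect d (fs' k) x" if x: "x \<in> {1..d}" for x
    using kb(2)[OF d k g x] kb(2)[OF d k g' x] e by metis
  have d1: "(1::nat) \<in> {1..d}" using d by simp
  obtain x0 where x0: "x0 \<in> {1..d}" "rho_aut d (fs k) x0 = 1" using rho_surj[OF ak(1) d1] by blast
  obtain x1 where x1: "x1 \<in> {1..d}" "rho_aut d (fs' k) x1 = 1" using rho_surj[OF ak(2) d1] by blast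
  have "\<sigma> k \<ge> \<sigma>' k" using eb[OF x0(1)] x0 rho_in[OF ak(2) x0(1)] by auto
  moreover have "\<sigma>' k \<ge> \<sigma> k" using eb[OF x1(1)] x1 rho_in[OF ak(1) x1(1)] by auto
  ultimately have sk: "\<sigma> k = \<sigma>' k" by simp
  have rb: "rho_aut d (fs k) x = rho_aut d (fs' k) x" if x: "x \<in> {1..d}" for x
    using eb[OF x] sk rho_in[OF ak(1) x] rho_in[OF ak(2) x] by auto
  have ss: "\<sigma> = \<sigma>'"
  proof
    fix j show "\<sigma> j = \<sigma>' j"
    proof (cases "j \<in> {1..n}")
      case True
      show ?thesis
      proof (cases "j = k")
        case False
        have "ee d (\<sigma> k) (\<sigma> j) = ee d (\<sigma>' k) (\<sigma>' j)"
          using kappa_ee(1)[OF d k True False, of \<sigma> fs] kappa_ee(1)[OF d k True False, of \<sigma>' fs'] e by metis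
        thus ?thesis using sk ee_inj[OF d] by metis
      qed (use sk in simp)
    next
      case False thus ?thesis using permutes_not_in[OF s] permutes_not_in[OF s'] by metis
    qed
  qed
  have ff: "fs = fs'"
  proof
    fix j show "fs j = fs' j"
    proof (cases "j \<in> {1..n}")
      case True
      show ?thesis
      proof (cases "j = k")
        case False
        show ?thesis
          using kappa_ee(2)[OF d k True False, of \<sigma> fs] kappa_ee(2)[OF d k True False, of \<sigma>' fs'] e by metis
      next
        case True
        show ?thesis unfolding True by (rule aut_eq[OF ak]) (use rb sb in auto)
      qed
    next
      case False thus ?thesis using Aparts(3)[OF g] Aparts(3)[OF g'] by metis
    qed
  qed
  show ?thesis using ss ff by simp
qed

lemma part1:
  assumes d: "1 \<le> d" and k: "1 \<le> k" "k \<le> n"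
  shows "inj_on (kappa d n k) (A d n) \<and> kappa d n k ` A d n \<subseteq> A d (n + d - 1)"
proof
  show "inj_on (kappa d n k) (A d n)"
  proof (rule inj_onI)
    fix g g' assume "g \<in> A d n" "g' \<in> A d n" "kappa d n k g = kappa d n k g'"
    thus "g = g'" using kappa_inj[OF d k] by (metis prod.exhaust)
  qed
  show "kappa d n k ` A d n \<subseteq> A d (n + d - 1)"
    using kappa_A[OF d k] by (metis image_subsetI prod.exhaust)
qed

lemma part4:
  assumes "1 \<le> k" "i \<notin> {k..k + d - 1}"
  shows "rho_n (kappa d n k g) i = varsigma d n k (rho_n g) i"
proof -
  obtain \<sigma> fs where g: "g = (\<sigma>, fs)" by fastforce
  have "tau_at d k (rho_aut d (fs k)) i = i" using assms unfolding tau_at_def by auto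
  thus ?thesis by (simp add: g rho_n_def fst_kappa)
qed

lemma part2:
  assumes d: "1 \<le> d" and k: "1 \<le> k" "k \<le> n" and gA: "(\<sigma>, f) \<in> A d n" and hA: "(\<tau>, g) \<in> A d n"
  shows "kappa d n k (wr_mult (\<sigma>, f) (\<tau>, g)) = wr_mult (kappa d n (\<tau> k) (\<sigma>, f)) (kappa d n k (\<tau>, g))"
proof -
  define GH where "GH = (\<lambda>i. f (\<tau> i) \<circ> g i)"
  have wm: "wr_mult (\<sigma>, f) (\<tau>, g) = (\<sigma> \<circ> \<tau>, GH)" by (simp add: wr_mult_def GH_def)
  note s = Aparts(1)[OF gA] and t = Aparts(1)[OF hA]
  have tin: "\<And>j. j \<in> {1..n} \<Longrightarrow> \<tau> j \<in> {1..n}" by (simp only: permutes_in_image[OF t])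
  have tinj: "\<And>i j. \<tau> i = \<tau> j \<Longrightarrow> i = j" using permutes_inj[OF t] by (simp add: inj_def)
  have ghA: "(\<sigma> \<circ> \<tau>, GH) \<in> A d n"
    unfolding A_iff
  proof (intro conjI ballI allI impI)
    show "\<sigma> \<circ> \<tau> permutes {1..n}" by (rule permutes_compose[OF t s])
    fix i
    show "i \<in> {1..n} \<Longrightarrow> is_aut d (GH i)" unfolding GH_def
      using aut_comp Aparts(2)[OF gA] Aparts(2)[OF hA] tin by simp
    show "i \<notin> {1..n} \<Longrightarrow> GH i = id" unfolding GH_def
      using Aparts(3)[OF gA] Aparts(3)[OF hA] permutes_not_in[OF t] by simp
  qed
  define a where "a = \<tau> k"
  have ain: "a \<in> {1..n}" using tin k by (simp add: a_def)
  hence ka: "1 \<le> a" "a \<le> n" by auto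
  have af: "is_aut d (f a)" using Aparts(2)[OF gA] ain by simp
  have ag: "is_aut d (g k)" using Aparts(2)[OF hA] k by simp
  have GHk: "GH k = f a \<circ> g k" by (simp add: GH_def a_def)
  obtain P F where L: "kappa d n k (\<sigma> \<circ> \<tau>, GH) = (P, F)" by fastforce
  obtain Q1 G1 where R1: "kappa d n a (\<sigma>, f) = (Q1, G1)" by fastforce
  obtain Q2 G2 where R2: "kappa d n k (\<tau>, g) = (Q2, G2)" by fastforce
  have pw: "P i = Q1 (Q2 i) \<and> F i = G1 (Q2 i) \<circ> G2 i" for i
  proof (cases "i \<in> {1..n + d - 1}")
    case True
    show ?thesis
    proof (rule classify[OF d k True])
      fix x assume x: "x \<in> {1..d}" "i = k + x - 1"
      have rg: "rho_aut d (g k) x \<in> {1..d}" using rho_in[OF ag x(1)] .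
      have P1: "P i = \<sigma> a + rho_aut d (f a) (rho_aut d (g k) x) - 1"
        using kb(1)[OF d k ghA x(1)] L x(2) GHk rho_comp[OF af ag x(1)] by (simp add: a_def)
      have F1: "F i = sect d (f a) (rho_aut d (g k) x) \<circ> sect d (g k) x"
        using kb(2)[OF d k ghA x(1)] L x(2) GHk sect_comp[OF af ag x(1)] by simp
      have Q2i: "Q2 i = a + rho_aut d (g k) x - 1" "G2 i = sect d (g k) x"
        using kb[OF d k hA x(1)] R2 x(2) by (simp_all add: a_def)
      have "Q1 (a + rho_aut d (g k) x - 1) = \<sigma> a + rho_aut d (f a) (rho_aut d (g k) x) - 1"
           "G1 (a + rho_aut d (g k) x - 1) = sect d (f a) (rho_aut d (g k) x)"
        using kb[OF d ka gA rg] R1 by simp_all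
      thus ?thesis using P1 F1 Q2i by simp
    next
      fix j assume j: "j \<in> {1..n}" "j \<noteq> k" "i = ee d k j"
      have tj: "\<tau> j \<in> {1..n}" "\<tau> j \<noteq> a" using tin[OF j(1)] tinj j(2) by (auto simp: a_def)
      have P1: "P i = ee d (\<sigma> a) (\<sigma> (\<tau> j))" "F i = f (\<tau> j) \<circ> g j"
        using kappa_ee[OF d k j(1,2), of "\<sigma> \<circ> \<tau>" GH] L j(3) by (simp_all add: a_def GH_def)
      have Q2i: "Q2 i = ee d a (\<tau> j)" "G2 i = g j"
        using kappa_ee[OF d k j(1,2), of \<tau> g] R2 j(3) by (simp_all add: a_def)
      have "Q1 (ee d a (\<tau> j)) = ee d (\<sigma> a) (\<sigma> (\<tau> j))" "G1 (ee d a (\<tau> j)) = f (\<tau> j)"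
        using kappa_ee[OF d ka tj, of \<sigma> f] R1 by simp_all
      thus ?thesis using P1 Q2i by simp
    qed
  next
    case False
    hence o: "i = 0 \<or> n + d - 1 < i" by auto
    have "P i = i" "F i = id" using kappa_out[OF k o, of "\<sigma> \<circ> \<tau>" GH] L by simp_all
    moreover have "Q2 i = i" "G2 i = id" using kappa_out[OF k o, of \<tau> g] R2 by simp_all
    moreover have "Q1 i = i" "G1 i = id" using kappa_out[OF ka o, of \<sigma> f] R1 by simp_all
    ultimately show ?thesis by simp
  qed
  have "P = Q1 \<circ> Q2" "F = (\<lambda>i. G1 (Q2 i) \<circ> G2 i)" using pw by auto
  thus ?thesis using L R1 R2 wm by (simp add: wr_mult_def a_def)
qed


lemma ar1: "1 \<le> d \<Longrightarrow> a \<noteq> b \<Longrightarrow> r \<in> {1..d} \<Longrightarrow> ee d (ee d a b) (a + r - 1) = ee d b a + r - 1"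
  by (auto simp: ee_def)
lemma ar2: "1 \<le> d \<Longrightarrow> a \<noteq> b \<Longrightarrow> a \<noteq> c \<Longrightarrow> b \<noteq> c \<Longrightarrow>
   ee d (ee d b a) (ee d b c) = ee d (ee d a b) (ee d a c)"
  by (auto simp: ee_def)
lemma idx: "1 \<le> d \<Longrightarrow> 1 \<le> k \<Longrightarrow> k < l \<Longrightarrow> j \<noteq> k \<Longrightarrow> j \<noteq> l \<Longrightarrow> ee d k (ee d l j) = ee d (l + d - 1) (ee d k j)"
  by (auto simp: ee_def)
lemma part3:
  assumes d: "1 \<le> d" and k: "1 \<le> k" "k < l" "l \<le> n" and gA: "(\<sigma>, fs) \<in> A d n"
  shows "kappa d (n + d - 1) k (kappa d n l (\<sigma>, fs)) = kappa d (n + d - 1) (l + d - 1) (kappa d n k (\<sigma>, fs))"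
proof -
  have kn: "1 \<le> k" "k \<le> n" and ln: "1 \<le> l" "l \<le> n" using k by auto
  have kN: "1 \<le> k" "k \<le> n + d - 1" and lN: "1 \<le> l + d - 1" "l + d - 1 \<le> n + d - 1" using k d by auto
  obtain \<pi> F where G: "kappa d n l (\<sigma>, fs) = (\<pi>, F)" by fastforce
  obtain \<pi>' F' where G': "kappa d n k (\<sigma>, fs) = (\<pi>', F')" by fastforce
  have GA: "(\<pi>, F) \<in> A d (n + d - 1)" using kappa_A[OF d ln gA] G by simp
  have GA': "(\<pi>', F') \<in> A d (n + d - 1)" using kappa_A[OF d kn gA] G' by simp
  note s = Aparts(1)[OF gA]
  have sin: "\<And>j. j \<in> {1..n} \<Longrightarrow> \<sigma> j \<in> {1..n}" by (simp only: permutes_in_image[OF s])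
  have sinj: "\<And>i j. \<sigma> i = \<sigma> j \<Longrightarrow> i = j" using permutes_inj[OF s] by (simp add: inj_def)
  have ab: "\<sigma> k \<noteq> \<sigma> l" using sinj k by fastforce
  have kin: "k \<in> {1..n}" "k \<noteq> l" and lin: "l \<in> {1..n}" "l \<noteq> k" using k by auto
  have eelk: "ee d l k = k" using k by (simp add: ee_def)
  have eekl: "ee d k l = l + d - 1" using k by (simp add: ee_def)
  have \<pi>k: "\<pi> k = ee d (\<sigma> l) (\<sigma> k)" "F k = fs k"
    using kappa_ee[OF d ln kin, of \<sigma> fs] G eelk by simp_all
  have \<pi>'l: "\<pi>' (l + d - 1) = ee d (\<sigma> k) (\<sigma> l)" "F' (l + d - 1) = fs l"
    using kappa_ee[OF d kn lin, of \<sigma> fs] G' eekl by simp_all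
  obtain P H where L: "kappa d (n + d - 1) k (\<pi>, F) = (P, H)" by fastforce
  obtain Q K where R: "kappa d (n + d - 1) (l + d - 1) (\<pi>', F') = (Q, K)" by fastforce
  have pw: "P i = Q i \<and> H i = K i" for i
  proof (cases "i \<in> {1..n + d - 1 + d - 1}")
    case True
    show ?thesis
    proof (rule classify[OF d kN True])
      fix x assume x: "x \<in> {1..d}" "i = k + x - 1"
      have r: "rho_aut d (fs k) x \<in> {1..d}" using rho_in[OF Aparts(2)[OF gA kin(1)] x(1)] .
      have P1: "P i = ee d (\<sigma> l) (\<sigma> k) + rho_aut d (fs k) x - 1" "H i = sect d (fs k) x"
        using kb[OF d kN GA x(1)] L x(2) \<pi>k by simp_all
      have m: "k + x - 1 \<in> {1..n + d - 1}" "k + x - 1 \<noteq> l + d - 1" "ee d (l + d - 1) (k + x - 1) = k + x - 1"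
        using x k by (auto simp: ee_def)
      have Q1: "Q i = ee d (\<pi>' (l + d - 1)) (\<pi>' (k + x - 1))" "K i = F' (k + x - 1)"
        using kappa_ee[OF d lN m(1,2), of \<pi>' F'] R x(2) m(3) by simp_all
      have "\<pi>' (k + x - 1) = \<sigma> k + rho_aut d (fs k) x - 1" "F' (k + x - 1) = sect d (fs k) x"
        using kb[OF d kn gA x(1)] G' by simp_all
      thus ?thesis using P1 Q1 \<pi>'l ar1[OF d ab r] by simp
    next
      fix m assume m: "m \<in> {1..n + d - 1}" "m \<noteq> k" "i = ee d k m"
      show ?thesis
      proof (rule classify[OF d ln m(1)])
        fix y assume y: "y \<in> {1..d}" "m = l + y - 1"
        have r: "rho_aut d (fs l) y \<in> {1..d}" using rho_in[OF Aparts(2)[OF gA lin(1)] y(1)] .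
        have "\<pi> m = \<sigma> l + rho_aut d (fs l) y - 1" "F m = sect d (fs l) y"
          using kb[OF d ln gA y(1)] G y(2) by simp_all
        hence P1: "P i = ee d (ee d (\<sigma> l) (\<sigma> k)) (\<sigma> l + rho_aut d (fs l) y - 1)" "H i = sect d (fs l) y"
          using kappa_ee[OF d kN m(1,2), of \<pi> F] L m(3) \<pi>k by simp_all
        have ii: "i = (l + d - 1) + y - 1" using m y k by (simp add: ee_def split: if_splits; linarith)
        have Q1: "Q i = ee d (\<sigma> k) (\<sigma> l) + rho_aut d (fs l) y - 1" "K i = sect d (fs l) y"
          using kb[OF d lN GA' y(1)] R ii \<pi>'l by simp_all
        show ?thesis using P1 Q1 ar1[OF d ab[symmetric] r] by simp
      next
        fix j assume j: "j \<in> {1..n}" "j \<noteq> l" "m = ee d l j"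
        have jk: "j \<noteq> k" using j m eelk by auto
        have c: "\<sigma> j \<noteq> \<sigma> k" "\<sigma> j \<noteq> \<sigma> l" using sinj jk j(2) by auto
        have "\<pi> m = ee d (\<sigma> l) (\<sigma> j)" "F m = fs j"
          using kappa_ee[OF d ln j(1,2), of \<sigma> fs] G j(3) by simp_all
        hence P1: "P i = ee d (ee d (\<sigma> l) (\<sigma> k)) (ee d (\<sigma> l) (\<sigma> j))" "H i = fs j"
          using kappa_ee[OF d kN m(1,2), of \<pi> F] L m(3) \<pi>k by simp_all
        have ii: "i = ee d (l + d - 1) (ee d k j)" using idx[OF d k(1,2) jk j(2)] m(3) j(3) by simp
        have mm: "ee d k j \<in> {1..n + d - 1}" "ee d k j \<noteq> l + d - 1"
          using j jk k d by (auto simp: ee_def)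
        have "\<pi>' (ee d k j) = ee d (\<sigma> k) (\<sigma> j)" "F' (ee d k j) = fs j"
          using kappa_ee[OF d kn j(1) jk, of \<sigma> fs] G' by simp_all
        hence Q1: "Q i = ee d (ee d (\<sigma> k) (\<sigma> l)) (ee d (\<sigma> k) (\<sigma> j))" "K i = fs j"
          using kappa_ee[OF d lN mm, of \<pi>' F'] R ii \<pi>'l by simp_all
        show ?thesis using P1 Q1 ar2[OF d ab c(1)[symmetric] c(2)[symmetric]] by simp
      qed
    qed
  next
    case False
    hence o: "i = 0 \<or> n + d - 1 + d - 1 < i" by auto
    show ?thesis using kappa_out[OF kN o, of \<pi> F] kappa_out[OF lN o, of \<pi>' F'] L R by simp
  qed
  have "P = Q" "H = K" using pw by auto
  thus ?thesis using L R G G' by simp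
qed


theorem mainTheorem3:
  fixes d :: nat
  assumes "d \<ge> 2"
  shows "(\<forall>n k. 1 \<le> k \<and> k \<le> n \<longrightarrow>
            inj_on (kappa d n k) (A d n) \<and> kappa d n k ` A d n \<subseteq> A d (n + d - 1))
       \<and> (\<forall>n g h k. g \<in> A d n \<and> h \<in> A d n \<and> 1 \<le> k \<and> k \<le> n \<longrightarrow>
            kappa d n k (wr_mult g h)
              = wr_mult (kappa d n (rho_n h k) g) (kappa d n k h))
       \<and> (\<forall>n g k l. g \<in> A d n \<and> 1 \<le> k \<and> k < l \<and> l \<le> n \<longrightarrow>
            kappa d (n + d - 1) k (kappa d n l g)
              = kappa d (n + d - 1) (l + d - 1) (kappa d n k g))
       \<and> (\<forall>n g k i. g \<in> A d n \<and> 1 \<le> k \<and> k \<le> n \<and> i \<in> {1..n + d - 1}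
              \<and> i \<notin> {k..k + d - 1} \<longrightarrow>
            rho_n (kappa d n k g) i = varsigma d n k (rho_n g) i)"
proof -
  have d: "1 \<le> d" using assms by simp
  have c1: "\<forall>n k. 1 \<le> k \<and> k \<le> n \<longrightarrow>
            inj_on (kappa d n k) (A d n) \<and> kappa d n k ` A d n \<subseteq> A d (n + d - 1)"
    using part1[OF d] by blast
  have c2: "\<forall>n g h k. g \<in> A d n \<and> h \<in> A d n \<and> 1 \<le> k \<and> k \<le> n \<longrightarrow>
            kappa d n k (wr_mult g h)
              = wr_mult (kappa d n (rho_n h k) g) (kappa d n k h)"
  proof (intro allI impI)
    fix n k :: nat and g h assume a: "g \<in> A d n \<and> h \<in> A d n \<and> 1 \<le> k \<and> k \<le> n"
    obtain \<sigma> f where g: "g = (\<sigma>, f)" by fastforce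
    obtain \<tau> g' where h: "h = (\<tau>, g')" by fastforce
    show "kappa d n k (wr_mult g h) = wr_mult (kappa d n (rho_n h k) g) (kappa d n k h)"
      using part2[OF d, of k n \<sigma> f \<tau> g'] a g h by (simp add: rho_n_def)
  qed
  have c3: "\<forall>n g k l. g \<in> A d n \<and> 1 \<le> k \<and> k < l \<and> l \<le> n \<longrightarrow>
            kappa d (n + d - 1) k (kappa d n l g)
              = kappa d (n + d - 1) (l + d - 1) (kappa d n k g)"
  proof (intro allI impI)
    fix n k l :: nat and g assume a: "g \<in> A d n \<and> 1 \<le> k \<and> k < l \<and> l \<le> n"
    obtain \<sigma> f where g: "g = (\<sigma>, f)" by fastforce
    show "kappa d (n + d - 1) k (kappa d n l g) = kappa d (n + d - 1) (l + d - 1) (kappa d n k g)"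
      using part3[OF d, of k l n \<sigma> f] a g by simp
  qed
  have c4: "\<forall>n g k i. g \<in> A d n \<and> 1 \<le> k \<and> k \<le> n \<and> i \<in> {1..n + d - 1}
              \<and> i \<notin> {k..k + d - 1} \<longrightarrow>
            rho_n (kappa d n k g) i = varsigma d n k (rho_n g) i"
    using part4 by blast
  show ?thesis using c1 c2 c3 c4 by blast
qed

end
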